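(* If $\mathcal Q$ is a countable collection of probability measures on $\{0,1\}^{\mathbb N}$, then $\mathcal Q$ is UME-learnable.
   Context: $\{0,1\}^{\mathbb N}$ carries the product $\sigma$-algebra. For a probability measure $\mu$ on $\{0,1\}^{\mathbb N}$, $\mathrm{Mean}(\mu)\in[0,1]^{\mathbb N}$ is the vector whose $j$-th coordinate is $\mathbb E[X_j]$ for $X\sim\mu$. A collection $\mathcal Q$ of such measures is UME-learnable if there exist (measurable) estimators $\mathcal A_n:(\{0,1\}^{\mathbb N})^n\to[0,1]^{\mathbb N}$, $n\in\mathbb N$, such that for every $\mu\in\mathcal Q$, $\mathbb E_{S\sim\mu^n}\|\mathcal A_n(S)-\mathrm{Mean}(\mu)\|_\infty\to0$ as $n\to\infty$, where $S$ consists of $n$ i.i.d. draws from $\mu$. *)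

theory Defs
  imports "HOL-Probability.Probability"
begin

definition cantor_space :: "(nat \<Rightarrow> bool) measure" where
  "cantor_space = PiM UNIV (\<lambda>_. count_space UNIV)"

definition prob_on_cantor :: "(nat \<Rightarrow> bool) measure \<Rightarrow> bool" where
  "prob_on_cantor \<mu> \<longleftrightarrow> prob_space \<mu> \<and> sets \<mu> = sets cantor_space"

definition Mean :: "(nat \<Rightarrow> bool) measure \<Rightarrow> nat \<Rightarrow> real" where
  "Mean \<mu> j = (\<integral>x. (if x j then 1 else 0) \<partial>\<mu>)"

definition UME_learnable :: "(nat \<Rightarrow> bool) measure set \<Rightarrow> bool" where
  "UME_learnable Q \<longleftrightarrow>
     (\<exists>A :: nat \<Rightarrow> (nat \<Rightarrow> nat \<Rightarrow> bool) \<Rightarrow> nat \<Rightarrow> real.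
        (\<forall>n. A n \<in> PiM {..<n} (\<lambda>_. cantor_space) \<rightarrow>\<^sub>M PiM UNIV (\<lambda>_. borel)) \<and>
        (\<forall>n S j. A n S j \<in> {0..1}) \<and>
        (\<forall>\<mu>\<in>Q. (\<lambda>n. \<integral>S. (SUP j. \<bar>A n S j - Mean \<mu> j\<bar>) \<partial>(PiM {..<n} (\<lambda>_. \<mu>)))
                    \<longlonglongrightarrow> 0))"

end

theory Submission
  imports Defs "HOL-Real_Asymp.Real_Asymp"
begin


definition fj :: "nat \<Rightarrow> (nat \<Rightarrow> bool) \<Rightarrow> real" where
  "fj j x = (if x j then 1 else 0)"

lemma space_cantor[simp]: "space cantor_space = UNIV"
  by (simp add: cantor_space_def space_PiM)

lemma fj_meas_cantor: "fj j \<in> borel_measurable cantor_space"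
  unfolding fj_def cantor_space_def by measurable

lemma fj_meas: "prob_on_cantor \<mu> \<Longrightarrow> fj j \<in> borel_measurable \<mu>"
  using fj_meas_cantor measurable_cong_sets[of \<mu> cantor_space borel borel]
  by (auto simp: prob_on_cantor_def)

lemma Mean_fj: "Mean \<mu> j = (\<integral>x. fj j x \<partial>\<mu>)"
  by (simp add: Mean_def fj_def)

lemma Mean_range: assumes "prob_on_cantor \<mu>" shows "Mean \<mu> j \<in> {0..1}"
proof -
  interpret prob_space \<mu> using assms by (simp add: prob_on_cantor_def)
  have "Mean \<mu> j \<le> 1" unfolding Mean_fj
    by (rule integral_le_const) (auto simp: fj_def[symmetric] intro!: integrable_const_bound[where B=1] fj_meas assms, auto simp: fj_def)
  moreover have "0 \<le> Mean \<mu> j" unfolding Mean_fj by (rule integral_nonneg_AE) (auto simp: fj_def)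
  ultimately show ?thesis by auto
qed

definition emp :: "nat \<Rightarrow> nat \<Rightarrow> (nat \<Rightarrow> nat \<Rightarrow> bool) \<Rightarrow> real" where
  "emp n j S = (\<Sum>i<n. fj j (S i)) / real n"

lemma hoeff:
  assumes mu: "prob_on_cantor \<mu>" and n: "n > 0" and d: "\<delta> \<ge> 0"
  shows "measure (PiM {..<n} (\<lambda>_. \<mu>)) {S\<in>space (PiM {..<n} (\<lambda>_. \<mu>)). \<bar>emp n j S - Mean \<mu> j\<bar> \<ge> \<delta>}
         \<le> 2 * exp (-2 * real n * \<delta>\<^sup>2)"
proof -
  let ?P = "PiM {..<n} (\<lambda>_. \<mu>)"
  interpret mu: prob_space \<mu> using mu by (simp add: prob_on_cantor_def)
  interpret P: prob_space ?P by (intro prob_space_PiM mu.prob_space_axioms)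
  have fm[measurable]: "fj j \<in> borel_measurable \<mu>" by (rule fj_meas[OF mu])
  have rv: "(\<lambda>S. fj j (S i)) \<in> ?P \<rightarrow>\<^sub>M borel" if "i < n" for i
  proof -
    have "(\<lambda>S. S i) \<in> ?P \<rightarrow>\<^sub>M \<mu>"
      using measurable_component_singleton[of i "{..<n}" "\<lambda>_. \<mu>"] that by simp
    then show ?thesis using fm by (rule measurable_compose)
  qed
  have comp: "distr ?P borel (\<lambda>S. fj j (S i)) = distr \<mu> borel (fj j)" if "i < n" for i
  proof -
    have "distr ?P borel (\<lambda>S. fj j (S i)) = distr (distr ?P \<mu> (\<lambda>S. S i)) borel (fj j)"
      using that by (subst distr_distr) (auto simp: comp_def)
    also have "distr ?P \<mu> (\<lambda>S. S i) = \<mu>"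
      using that by (intro distr_PiM_component mu.prob_space_axioms) auto
    finally show ?thesis .
  qed
  have indep: "P.indep_vars (\<lambda>_. borel) (\<lambda>i S. fj j (S i)) {..<n}"
  proof (subst P.indep_vars_iff_distr_eq_PiM')
    show "{..<n} \<noteq> {}" using n by auto
    show "\<And>i. i \<in> {..<n} \<Longrightarrow> (\<lambda>S. fj j (S i)) \<in> ?P \<rightarrow>\<^sub>M borel" using rv by auto
    have "distr ?P (PiM {..<n} (\<lambda>_. borel)) (\<lambda>S. \<lambda>i\<in>{..<n}. fj j (S i))
        = distr ?P (PiM {..<n} (\<lambda>_. distr \<mu> borel (fj j))) (compose {..<n} (fj j))"
      by (intro distr_cong sets_PiM_cong) (auto simp: compose_def)
    also have "\<dots> = PiM {..<n} (\<lambda>_. distr \<mu> (distr \<mu> borel (fj j)) (fj j))"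
      by (rule distr_PiM_finite_prob_space') (auto intro: mu.prob_space_axioms mu.prob_space_distr)
    also have "\<dots> = PiM {..<n} (\<lambda>_. distr \<mu> borel (fj j))"
      by (intro PiM_cong distr_cong) auto
    also have "\<dots> = PiM {..<n} (\<lambda>i. distr ?P borel (\<lambda>S. fj j (S i)))"
      by (intro PiM_cong) (auto simp: comp)
    finally show "distr ?P (PiM {..<n} (\<lambda>_. borel)) (\<lambda>S. \<lambda>i\<in>{..<n}. fj j (S i)) =
        PiM {..<n} (\<lambda>i. distr ?P borel (\<lambda>S. fj j (S i)))" .
  qed
  interpret H: Hoeffding_ineq_iid ?P "{..<n}" "\<lambda>i S. fj j (S i)" "\<lambda>S. fj j (S 0)" 0 1
     "P.expectation (\<lambda>S. fj j (S 0))"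
  proof unfold_locales
    show "finite {..<n}" by simp
    show "P.indep_vars (\<lambda>_. borel) (\<lambda>i S. fj j (S i)) {..<n}" by (rule indep)
    fix i assume "i \<in> {..<n}"
    then show "distr ?P borel (\<lambda>S. fj j (S i)) = distr ?P borel (\<lambda>S. fj j (S 0))"
      using n by (simp add: comp)
  next
    show "(\<lambda>S. fj j (S 0)) \<in> ?P \<rightarrow>\<^sub>M borel" using rv n by auto
    show "AE x in ?P. fj j (x 0) \<in> {0..1}" by (auto simp: fj_def)
  qed simp
  have E: "P.expectation (\<lambda>S. fj j (S 0)) = Mean \<mu> j"
  proof -
    have c0: "(\<lambda>S. S 0) \<in> ?P \<rightarrow>\<^sub>M \<mu>"
      using measurable_component_singleton[of 0 "{..<n}" "\<lambda>_. \<mu>"] n by simp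
    have "P.expectation (\<lambda>S. fj j (S 0)) = (\<integral>x. fj j x \<partial>(distr ?P \<mu> (\<lambda>S. S 0)))"
      by (rule integral_distr[symmetric, OF c0 fm])
    also have "distr ?P \<mu> (\<lambda>S. S 0) = \<mu>"
      using n by (intro distr_PiM_component mu.prob_space_axioms) auto
    finally show ?thesis by (simp add: Mean_fj)
  qed
  have "P.prob {x \<in> space ?P. \<delta> \<le> \<bar>(\<Sum>i\<in>{..<n}. fj j (x i)) / real (card {..<n}) - P.expectation (\<lambda>S. fj j (S 0))\<bar>}
     \<le> 2 * exp (- 2 * real (card {..<n}) * \<delta>\<^sup>2 / (1 - 0)\<^sup>2)"
    by (rule H.Hoeffding_ineq_abs_ge') (use d n in auto)
  then show ?thesis by (simp add: E emp_def)
qed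



lemma sup_approx:
  fixes g :: "nat \<Rightarrow> real"
  assumes B: "\<And>j. g j \<le> B" and e: "\<epsilon> > 0"
  shows "\<exists>j. \<forall>j'. g j' < g j + \<epsilon>"
proof -
  have bdd: "bdd_above (range g)" using B by (intro bdd_aboveI[where M=B]) auto
  have "(SUP j. g j) - \<epsilon> < (SUP j. g j)" using e by simp
  then obtain j where j: "(SUP j. g j) - \<epsilon> < g j" using less_cSUP_iff[OF _ bdd] by auto
  have "g j' \<le> (SUP j. g j)" for j' by (rule cSUP_upper[OF _ bdd]) simp
  with j show ?thesis by (intro exI[of _ j]) (smt (verit))
qed

lemma emp_meas_cantor: "emp n j \<in> borel_measurable (PiM {..<n} (\<lambda>_. cantor_space))"
  unfolding emp_def using fj_meas_cantor[of j] by measurable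

lemma emp_meas: assumes "sets M = sets cantor_space"
  shows "emp n j \<in> borel_measurable (PiM {..<n} (\<lambda>_. M))"
proof -
  have "sets (PiM {..<n} (\<lambda>_. M)) = sets (PiM {..<n} (\<lambda>_. cantor_space))"
    using assms by (intro sets_PiM_cong) auto
  then show ?thesis using emp_meas_cantor measurable_cong_sets by blast
qed

definition cc :: "(nat \<Rightarrow> nat \<Rightarrow> real) \<Rightarrow> nat \<Rightarrow> nat \<Rightarrow> nat \<Rightarrow> nat" where
  "cc m n a b = (SOME j. \<forall>j'. \<bar>m a j' - m b j'\<bar> < \<bar>m a j - m b j\<bar> + 1 / (real n + 1))"

definition Js :: "(nat \<Rightarrow> nat \<Rightarrow> real) \<Rightarrow> nat \<Rightarrow> nat set" where
  "Js m n = (\<lambda>(a,b). cc m n a b) ` ({..n} \<times> {..n})"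

definition dl :: "nat \<Rightarrow> real" where "dl n = real n powr (-1/4)"

definition valid :: "(nat \<Rightarrow> nat \<Rightarrow> real) \<Rightarrow> nat \<Rightarrow> nat \<Rightarrow> (nat \<Rightarrow> nat \<Rightarrow> bool) \<Rightarrow> bool" where
  "valid m n a S \<longleftrightarrow> (\<forall>j\<in>Js m n. \<bar>emp n j S - m a j\<bar> < dl n)"

definition Est :: "(nat \<Rightarrow> nat \<Rightarrow> real) \<Rightarrow> nat \<Rightarrow> (nat \<Rightarrow> nat \<Rightarrow> bool) \<Rightarrow> nat \<Rightarrow> real" where
  "Est m n S j = (if \<exists>a\<le>n. valid m n a S then m (LEAST a. valid m n a S) j else 0)"

lemma cc_prop:
  assumes mr: "\<And>a j. m a j \<in> {0..1}"
  shows "\<bar>m a j' - m b j'\<bar> < \<bar>m a (cc m n a b) - m b (cc m n a b)\<bar> + 1 / (real n + 1)"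
proof -
  have "\<exists>j. \<forall>j'. \<bar>m a j' - m b j'\<bar> < \<bar>m a j - m b j\<bar> + 1 / (real n + 1)"
  proof (rule sup_approx[where B=1])
    fix j show "\<bar>m a j - m b j\<bar> \<le> 1" using mr[of a j] mr[of b j] by (auto simp: abs_le_iff)
  next
    show "0 < 1 / (real n + 1)" by (simp add: add_pos_nonneg)
  qed
  then show ?thesis unfolding cc_def by (rule spec[OF someI_ex])
qed

lemma Est_range: assumes mr: "\<And>a j. m a j \<in> {0..1}" shows "Est m n S j \<in> {0..1}"
  using mr by (simp add: Est_def)

lemma Js_finite: "finite (Js m n)" by (simp add: Js_def)

lemma Js_card: "card (Js m n) \<le> (n+1)^2"
proof -
  have "card (Js m n) \<le> card ({..n} \<times> {..n})" unfolding Js_def by (rule card_image_le) simp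
  also have "\<dots> = (n+1)*(n+1)" by (simp add: card_cartesian_product)
  finally show ?thesis by (simp add: power2_eq_square)
qed

lemma vm_test: "Measurable.pred (PiM {..<n} (\<lambda>_. cantor_space)) (valid m n a)"
proof -
  have [measurable]: "emp n j \<in> borel_measurable (PiM {..<n} (\<lambda>_. cantor_space))" for j
    by (rule emp_meas_cantor)
  have "Measurable.pred (PiM {..<n} (\<lambda>_. cantor_space)) (\<lambda>S. \<bar>emp n j S - m a j\<bar> < dl n)" for j
    unfolding pred_def by (intro borel_measurable_less borel_measurable_abs borel_measurable_diff emp_meas_cantor) auto
  then show ?thesis unfolding valid_def by (intro pred_intros_countable_bounded)
qed

lemma L_test: "(\<lambda>S. LEAST a. valid m n a S) \<in> PiM {..<n} (\<lambda>_. cantor_space) \<rightarrow>\<^sub>M count_space UNIV"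
  by (intro measurable_Least vm_test)

lemma E_test: "Measurable.pred (PiM {..<n} (\<lambda>_. cantor_space)) (\<lambda>S. \<exists>a\<le>n. valid m n a S)"
proof -
  have eq: "(\<lambda>S. \<exists>a\<in>{..n}. valid m n a S) = (\<lambda>S. \<exists>a\<le>n. valid m n a S)"
    by (simp add: atMost_iff Bex_def)
  have "Measurable.pred (PiM {..<n} (\<lambda>_. cantor_space)) (\<lambda>S. \<exists>a\<in>{..n}. valid m n a S)"
    by (rule pred_intros_countable_bounded(4)[where X="{..n}" and P="\<lambda>S a. valid m n a S"]) (rule vm_test)
  then show ?thesis unfolding eq .
qed

lemma Est_j: "(\<lambda>S. Est m n S j) \<in> borel_measurable (PiM {..<n} (\<lambda>_. cantor_space))"
proof -
  have h: "(\<lambda>S. m (LEAST a. valid m n a S) j) \<in> borel_measurable (PiM {..<n} (\<lambda>_. cantor_space))"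
    by (rule measurable_compose[OF L_test], subst measurable_count_space_eq1, simp)
  have E: "{S \<in> space (PiM {..<n} (\<lambda>_. cantor_space)). \<exists>a\<le>n. valid m n a S} \<in> sets (PiM {..<n} (\<lambda>_. cantor_space))"
    using E_test[of n m] unfolding pred_def .
  show ?thesis unfolding Est_def
    by (rule measurable_If[OF h borel_measurable_const E])
qed

lemma Est_meas: "Est m n \<in> PiM {..<n} (\<lambda>_. cantor_space) \<rightarrow>\<^sub>M PiM UNIV (\<lambda>_. borel)"
proof -
  have "(\<lambda>\<omega> i. Est m n \<omega> i) \<in> PiM {..<n} (\<lambda>_. cantor_space) \<rightarrow>\<^sub>M PiM UNIV (\<lambda>_. borel)"
    by (rule measurable_PiM_single'[where f="\<lambda>j S. Est m n S j"]) (rule Est_j, simp)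
  then show ?thesis by (simp only:)
qed

lemma Est_good:
  assumes mr: "\<And>a j. m a j \<in> {0..1}" and t: "t \<le> n"
    and good: "\<forall>j\<in>Js m n. \<bar>emp n j S - m t j\<bar> < dl n"
  shows "\<bar>Est m n S j - m t j\<bar> \<le> 2 * dl n + 1 / (real n + 1)"
proof -
  have vt: "valid m n t S" using good by (simp add: valid_def)
  define a where "a = (LEAST a. valid m n a S)"
  have va: "valid m n a S" unfolding a_def by (rule LeastI[of _ t]) (rule vt)
  have at: "a \<le> t" unfolding a_def by (rule Least_le) (rule vt)
  have E: "Est m n S j = m a j" using vt t by (auto simp: Est_def a_def)
  define c where "c = cc m n a t"
  have cJ: "c \<in> Js m n" unfolding c_def Js_def using at t by auto
  have "\<bar>m a j - m t j\<bar> < \<bar>m a c - m t c\<bar> + 1 / (real n + 1)"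
    unfolding c_def by (rule cc_prop[OF mr])
  moreover have "\<bar>emp n c S - m a c\<bar> < dl n" using va cJ by (simp add: valid_def)
  moreover have "\<bar>emp n c S - m t c\<bar> < dl n" using good cJ by simp
  ultimately show ?thesis unfolding E by linarith
qed



lemma err_bound:
  assumes mr: "\<And>a j. m a j \<in> {0..1}" and mu: "prob_on_cantor \<mu>"
    and mt: "\<And>j. Mean \<mu> j = m t j" and t: "t \<le> n" and n: "n > 0"
  shows "(\<integral>S. (SUP j. \<bar>Est m n S j - Mean \<mu> j\<bar>) \<partial>(PiM {..<n} (\<lambda>_. \<mu>)))
     \<le> 2 * dl n + 1 / (real n + 1) + real ((n+1)^2) * (2 * exp (-2 * real n * (dl n)\<^sup>2))"
proof -
  let ?P = "PiM {..<n} (\<lambda>_. \<mu>)"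
  interpret mu: prob_space \<mu> using mu by (simp add: prob_on_cantor_def)
  interpret P: prob_space ?P by (intro prob_space_PiM mu.prob_space_axioms)
  define C where "C = 2 * dl n + 1 / (real n + 1)"
  have dl0: "0 \<le> dl n" by (simp add: dl_def)
  have C0: "0 \<le> C" unfolding C_def using dl0 by (simp add: add_nonneg_nonneg)
  define Bj where "Bj j = {S\<in>space ?P. dl n \<le> \<bar>emp n j S - Mean \<mu> j\<bar>}" for j
  define B where "B = (\<Union>j\<in>Js m n. Bj j)"
  have em: "emp n j \<in> borel_measurable ?P" for j
    using mu by (intro emp_meas) (simp add: prob_on_cantor_def)
  have Bj_sets: "Bj j \<in> sets ?P" for j
    unfolding Bj_def by (intro borel_measurable_le borel_measurable_abs borel_measurable_diff em borel_measurable_const)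
  have B_sets: "B \<in> sets ?P" unfolding B_def using Bj_sets Js_finite by blast
  have "measure ?P B \<le> (\<Sum>j\<in>Js m n. measure ?P (Bj j))"
    unfolding B_def by (rule measure_UNION_le[OF Js_finite Bj_sets])
  also have "\<dots> \<le> (\<Sum>j\<in>Js m n. 2 * exp (-2 * real n * (dl n)\<^sup>2))"
    by (rule sum_mono) (unfold Bj_def, rule hoeff[OF mu n dl0])
  also have "\<dots> = real (card (Js m n)) * (2 * exp (-2 * real n * (dl n)\<^sup>2))" by simp
  also have "\<dots> \<le> real ((n+1)^2) * (2 * exp (-2 * real n * (dl n)\<^sup>2))"
    by (rule mult_right_mono) (use Js_card[of m n] in \<open>simp only: of_nat_le_iff\<close>, simp)
  finally have mB: "measure ?P B \<le> real ((n+1)^2) * (2 * exp (-2 * real n * (dl n)\<^sup>2))" .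
  have pw: "(SUP j. \<bar>Est m n S j - Mean \<mu> j\<bar>) \<le> C + indicator B S" if S: "S \<in> space ?P" for S
  proof (rule cSUP_least)
    fix j
    show "\<bar>Est m n S j - Mean \<mu> j\<bar> \<le> C + indicator B S"
    proof (cases "S \<in> B")
      case True
      have "\<bar>Est m n S j - Mean \<mu> j\<bar> \<le> 1"
        using Est_range[where m=m and n=n and S=S and j=j, OF mr] mr[of t j] by (auto simp: mt abs_le_iff)
      then show ?thesis using True C0 by simp
    next
      case False
      then have "\<forall>j\<in>Js m n. \<bar>emp n j S - m t j\<bar> < dl n"
        using S by (auto simp: B_def Bj_def mt not_le)
      from Est_good[OF mr t this] show ?thesis using False by (simp add: C_def mt)
    qed
  qed simp
  have int: "integrable ?P (\<lambda>S. C + indicator B S)"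
    using B_sets by (intro Bochner_Integration.integrable_add) (auto intro!: integrable_real_indicator simp: P.emeasure_eq_measure)
  have "(\<integral>S. (SUP j. \<bar>Est m n S j - Mean \<mu> j\<bar>) \<partial>?P) \<le> (\<integral>S. C + indicator B S \<partial>?P)"
    by (rule integral_mono'[OF int pw]) (use C0 in \<open>auto simp: indicator_def\<close>)
  also have "\<dots> = C + measure ?P B"
    using B_sets by (subst Bochner_Integration.integral_add) (auto intro!: integrable_real_indicator simp: P.emeasure_eq_measure P.prob_space)
  finally show ?thesis using mB unfolding C_def by linarith
qed

lemma err_nonneg:
  assumes mr: "\<And>a j. m a j \<in> {0..1}" and mu: "prob_on_cantor \<mu>"
  shows "0 \<le> (\<integral>S. (SUP j. \<bar>Est m n S j - Mean \<mu> j\<bar>) \<partial>(PiM {..<n} (\<lambda>_. \<mu>)))"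
proof (rule integral_nonneg_AE, rule AE_I2)
  fix S
  have bdd: "bdd_above (range (\<lambda>j. \<bar>Est m n S j - Mean \<mu> j\<bar>))"
  proof (rule bdd_aboveI[where M=1])
    fix x assume "x \<in> range (\<lambda>j. \<bar>Est m n S j - Mean \<mu> j\<bar>)"
    then obtain j where "x = \<bar>Est m n S j - Mean \<mu> j\<bar>" by auto
    then show "x \<le> 1" using Est_range[where m=m and n=n and S=S and j=j, OF mr] Mean_range[OF mu, of j] by (auto simp: abs_le_iff)
  qed
  show "0 \<le> (SUP j. \<bar>Est m n S j - Mean \<mu> j\<bar>)"
    by (rule cSUP_upper2[OF bdd, of 0]) simp_all
qed

lemma bound_lim: "(\<lambda>n. 2 * dl n + 1 / (real n + 1) + real ((n+1)^2) * (2 * exp (-2 * real n * (dl n)\<^sup>2))) \<longlonglongrightarrow> 0"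
  unfolding dl_def by real_asymp


theorem theorem1:
  fixes Q :: "(nat \<Rightarrow> bool) measure set"
  assumes "countable Q"
    and "\<forall>\<mu>\<in>Q. prob_on_cantor \<mu>"
  shows "UME_learnable Q"
proof (cases "Q = {}")
  case True
  have "(\<lambda>S j. 0::real) \<in> PiM {..<n} (\<lambda>_. cantor_space) \<rightarrow>\<^sub>M PiM UNIV (\<lambda>_. borel)" for n
    by (rule measurable_const) (simp add: space_PiM)
  then show ?thesis unfolding UME_learnable_def using True
    by (intro exI[of _ "\<lambda>n S j. 0"]) auto
next
  case False
  define q where "q = from_nat_into Q"
  define m where "m a j = Mean (q a) j" for a j
  have qQ: "q a \<in> Q" for a unfolding q_def using False by (rule from_nat_into)
  have mr: "m a j \<in> {0..1}" for a j
    unfolding m_def using qQ assms(2) Mean_range by blast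
  show ?thesis unfolding UME_learnable_def
  proof (intro exI[of _ "Est m"] conjI ballI allI)
    fix n show "Est m n \<in> PiM {..<n} (\<lambda>_. cantor_space) \<rightarrow>\<^sub>M PiM UNIV (\<lambda>_. borel)"
      by (rule Est_meas)
  next
    fix n S j show "Est m n S j \<in> {0..1}" by (rule Est_range[OF mr])
  next
    fix \<mu> assume muQ: "\<mu> \<in> Q"
    have mu: "prob_on_cantor \<mu>" using assms(2) muQ by blast
    obtain t where t: "from_nat_into Q t = \<mu>"
      using from_nat_into_surj[OF assms(1) muQ] by blast
    have mt: "Mean \<mu> j = m t j" for j using t by (simp add: m_def q_def)
    show "(\<lambda>n. \<integral>S. (SUP j. \<bar>Est m n S j - Mean \<mu> j\<bar>) \<partial>(PiM {..<n} (\<lambda>_. \<mu>))) \<longlonglongrightarrow> 0"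
    proof (rule tendsto_sandwich[OF _ _ tendsto_const bound_lim])
      show "\<forall>\<^sub>F n in sequentially. 0 \<le> (\<integral>S. (SUP j. \<bar>Est m n S j - Mean \<mu> j\<bar>) \<partial>(PiM {..<n} (\<lambda>_. \<mu>)))"
        by (intro always_eventually allI err_nonneg[OF mr mu])
      show "\<forall>\<^sub>F n in sequentially. (\<integral>S. (SUP j. \<bar>Est m n S j - Mean \<mu> j\<bar>) \<partial>(PiM {..<n} (\<lambda>_. \<mu>)))
          \<le> 2 * dl n + 1 / (real n + 1) + real ((n+1)^2) * (2 * exp (-2 * real n * (dl n)\<^sup>2))"
        unfolding eventually_sequentially
        by (intro exI[of _ "Suc t"] allI impI err_bound[where m=m and \<mu>=\<mu> and t=t, OF mr mu mt]) auto
    qed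
  qed
qed

end
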